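(* Suppose there is a $(v,[k_1,k_2,k_3],\lambda)$ Hadamard partitioned difference family. Then $k_1$ and $k_2$ are (in some order) the two numbers $$\frac{2\lambda-k_3\pm\sqrt{2\lambda(2k_3+1)-3k_3^2}}{2}.$$
   Context: $G$ is a finite group of order $v$ written additively, with difference $x-y:=x+(-y)$. For $B\subseteq G$, $\Delta B$ is the multiset $\{x-y: x,y\in B, x\neq y\}$; for $\mathcal{F}=\{B_1,\dots,B_t\}$, $\Delta\mathcal{F}$ is the multiset union of the $\Delta B_i$. A $(v,[k_1,\dots,k_t],\lambda)$ partitioned difference family (PDF) is a collection $\{B_1,\dots,B_t\}$ of subsets partitioning some group $G$ of order $v$ with $|B_i|=k_i$ such that $\Delta\mathcal{F}$ contains every non-zero element of $G$ exactly $\lambda$ times. It is Hadamard (HPDF) if $v=2\lambda$. *)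

theory Defs
  imports Complex_Main "HOL-Library.Multiset"
begin

text \<open>The group is a finite type of class group_add (written additively, not
necessarily abelian); difference is x - y = x + (- y).\<close>

definition diff_mset :: "'a::group_add set \<Rightarrow> 'a multiset" where
  "diff_mset B = image_mset (\<lambda>(x, y). x - y) (mset_set {(x, y). x \<in> B \<and> y \<in> B \<and> x \<noteq> y})"

definition family_diff :: "'a::group_add set list \<Rightarrow> 'a multiset" where
  "family_diff Fs = sum_list (map diff_mset Fs)"

definition is_PDF :: "'a::{group_add,finite} set list \<Rightarrow> nat \<Rightarrow> nat list \<Rightarrow> nat \<Rightarrow> bool" where
  "is_PDF Fs v ks lam \<longleftrightarrow>
     v = card (UNIV :: 'a set) \<and>
     length ks = length Fs \<and>
     (\<forall>i<length Fs. card (Fs ! i) = ks ! i) \<and>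
     (\<forall>i<length Fs. \<forall>j<length Fs. i \<noteq> j \<longrightarrow> Fs ! i \<inter> Fs ! j = {}) \<and>
     \<Union> (set Fs) = UNIV \<and>
     (\<forall>g. g \<noteq> 0 \<longrightarrow> count (family_diff Fs) g = lam)"

definition is_HPDF :: "'a::{group_add,finite} set list \<Rightarrow> nat \<Rightarrow> nat list \<Rightarrow> nat \<Rightarrow> bool" where
  "is_HPDF Fs v ks lam \<longleftrightarrow> is_PDF Fs v ks lam \<and> v = 2 * lam"

end

theory Submission
  imports Defs
begin

lemma size_diff_mset:
  fixes B :: "'a::{group_add,finite} set"
  shows "size (diff_mset B) = card B * card B - card B"
proof -
  have e: "{(x, y). x \<in> B \<and> y \<in> B \<and> x \<noteq> y} = B \<times> B - (\<lambda>x. (x,x)) ` B" by auto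
  have "card ((\<lambda>x. (x,x)) ` B) = card B" by (rule card_image) (auto simp: inj_on_def)
  moreover have "card (B \<times> B - (\<lambda>x. (x,x)) ` B) = card (B \<times> B) - card ((\<lambda>x. (x,x)) ` B)"
    by (rule card_Diff_subset) auto
  ultimately show ?thesis unfolding diff_mset_def e by (simp add: card_cartesian_product)
qed

lemma zero_not_in_diff:
  fixes B :: "'a::{group_add,finite} set"
  shows "0 \<notin># diff_mset B"
  unfolding diff_mset_def by auto

lemma zero_not_in_family:
  fixes Fs :: "'a::{group_add,finite} set list"
  shows "0 \<notin># family_diff Fs"
  unfolding family_diff_def by (induction Fs) (auto simp: zero_not_in_diff)

lemma size_family:
  fixes Fs :: "'a::{group_add,finite} set list"
  shows "size (family_diff Fs) = (\<Sum>B\<leftarrow>Fs. card B * card B - card B)"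
  unfolding family_diff_def by (induction Fs) (auto simp: size_diff_mset)

lemma aux_identity: fixes a b c l v :: real
  assumes "a*a - a + (b*b-b) + (c*c-c) = l*(v-1)" "v = a+b+c" "v = 2*l"
  shows "2*l*(2*c+1) - 3*c^2 = (a-b)^2"
proof -
  have l: "l = (a+b+c)/2" using assms by simp
  show ?thesis using assms(1) unfolding assms(2) l by (simp add: field_simps power2_eq_square)
qed

theorem proposition3p2:
  fixes Fs :: "'a::{group_add,finite} set list"
    and v k1 k2 k3 lam :: nat
  assumes "is_HPDF Fs v [k1, k2, k3] lam"
  shows "{real k1, real k2} =
    {(2 * real lam - real k3 + sqrt (2 * real lam * (2 * real k3 + 1) - 3 * (real k3)^2)) / 2,
     (2 * real lam - real k3 - sqrt (2 * real lam * (2 * real k3 + 1) - 3 * (real k3)^2)) / 2}"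
proof -
  have P: "is_PDF Fs v [k1, k2, k3] lam" and v2: "v = 2 * lam" using assms by (auto simp: is_HPDF_def)
  have len: "length Fs = 3" using P by (simp add: is_PDF_def)
  then obtain A B C where F: "Fs = [A, B, C]"
    by (cases Fs; cases "tl Fs"; cases "tl (tl Fs)"; auto)
  have cards: "\<forall>i<length Fs. card (Fs ! i) = [k1, k2, k3] ! i" using P by (simp add: is_PDF_def)
  have disj: "\<And>i j. i < 3 \<Longrightarrow> j < 3 \<Longrightarrow> i \<noteq> j \<Longrightarrow> Fs ! i \<inter> Fs ! j = {}"
    using P len by (simp add: is_PDF_def)
  have cA: "card A = k1" using cards F by (metis length_Cons list.size(3) nth_Cons_0 zero_less_Suc)
  have cB: "card B = k2" using spec[OF cards, of 1] F by simp
  have cC: "card C = k3" using spec[OF cards, of 2] F by simp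
  have dAB: "A \<inter> B = {}" using disj[of 0 1] F by simp
  have dAC: "A \<inter> C = {}" using disj[of 0 2] F by simp
  have dBC: "B \<inter> C = {}" using disj[of 1 2] F by simp
  have U: "A \<union> B \<union> C = UNIV" using P F unfolding is_PDF_def by auto
  have vc: "v = card (UNIV :: 'a set)" using P by (simp add: is_PDF_def)
  have "card (A \<union> B \<union> C) = card A + card B + card C"
    using dAB dAC dBC by (simp add: card_Un_disjoint Int_Un_distrib2)
  hence vs: "v = k1 + k2 + k3" using U vc cA cB cC by simp
  have cnt: "\<And>g. g \<noteq> 0 \<Longrightarrow> count (family_diff Fs) g = lam" using P by (simp add: is_PDF_def)
  have k1: "k1 \<le> k1 * k1" "k2 \<le> k2*k2" "k3 \<le> k3*k3" by (simp_all add: le_square)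
  have "size (family_diff Fs) = sum (count (family_diff Fs)) (set_mset (family_diff Fs))"
    by (simp add: size_multiset_overloaded_eq)
  also have "\<dots> = sum (count (family_diff Fs)) (UNIV - {0})"
    by (rule sum.mono_neutral_left) (auto simp: zero_not_in_family)
  also have "\<dots> = lam * (v - 1)"
    using cnt vc by (simp add: card_Diff_singleton)
  finally have S: "k1 * k1 - k1 + (k2 * k2 - k2) + (k3 * k3 - k3) = lam * (v - 1)"
    using size_family[of Fs] F cA cB cC by (simp, insert k1, linarith)
  have vpos: "v \<ge> 1" using vc by (simp add: Suc_leI finite_UNIV_card_ge_0)
  have R: "real k1 * k1 - k1 + (real k2 * k2 - k2) + (real k3 * k3 - k3) = real lam * (real v - 1)"
    using arg_cong[OF S, of real] k1 vpos by (simp add: of_nat_diff)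
  have Rv: "real v = k1 + k2 + k3" "real v = 2 * real lam" using vs v2 by simp_all
  define D where "D = 2 * real lam * (2 * real k3 + 1) - 3 * (real k3)^2"
  have "D = (real k1 - real k2)^2" unfolding D_def
    using aux_identity[OF R] Rv by simp
  hence sq: "sqrt D = \<bar>real k1 - real k2\<bar>" by simp
  have s: "2 * real lam - real k3 = real k1 + real k2" using Rv by simp
  show ?thesis unfolding D_def[symmetric] sq s by (auto simp: abs_if)
qed

end
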